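(* Let $\lambda>0$, let $\omega$ be a rooted tree (root $\varrho$) in which every vertex has finitely many and at least one child, and consider the $\lambda$-biased branching random walk $(X(u),u\in\mathbb{T})$ on $\omega$ with reproduction law $\mu$ ($\mu_0=0$, $\mu_1<1$, $m=\sum_k k\mu_k\in(1,\infty)$). Assume that it is strongly recurrent on $\omega$, i.e. for every vertex $x$, $\mathbf{P}_\omega(\forall n\ \exists u\in\mathbb{T}:|u|\ge n, X(u)=x\mid X(\varnothing)=x)=1$. For $a>0$ and a vertex $x$ of $\omega$ set $$q_{a,x}:=\mathbf{P}_\omega\Big(\liminf_{n\to\infty}\max_{|u|=n}\frac{|X(u)|}{n}\ge a\,\Big|\,X(\varnothing)=x\Big).$$ Then $q_{a,x}=q_{a,\varrho}$ for every $a>0$ and every vertex $x$.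
   Context: $|x|$ is the distance of $x$ to $\varrho$, $x_-$ the parent and $\kappa_x$ the number of children of $x$. The $\lambda$-biased random walk on $\omega$ jumps from $\varrho$ to each child with probability $1/\kappa_\varrho$, and from $x\ne\varrho$ to $x_-$ with probability $\lambda/(\lambda+\kappa_x)$ and to each child with probability $1/(\lambda+\kappa_x)$. The branching random walk: genealogy $\mathbb{T}$ is a Bienaymé–Galton–Watson tree with offspring law $\mu$ (root $\varnothing$, $|u|$ = generation); each child of a particle at $x$ is placed independently by one step of the $\lambda$-biased walk from $x$; $\mathbf{P}_\omega$ denotes its law. *)

theory Defs
  imports "HOL-Probability.Probability"
begin

text \<open>Rooted tree \<omega> encoded via Ulam-Harris addresses: vertices are lists of nats,
  the root is [], the parent of x is butlast x, |x| = length x, and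
  kap x is the number of children of x (children are x@[i], i < kap x).\<close>

definition verts :: "(nat list \<Rightarrow> nat) \<Rightarrow> nat list set" where
  "verts kap = {xs. \<forall>i<length xs. xs ! i < kap (take i xs)}"

definition step :: "real \<Rightarrow> (nat list \<Rightarrow> nat) \<Rightarrow> nat list \<Rightarrow> nat list pmf" where
  "step lam kap x =
     (if x = [] then map_pmf (\<lambda>i. [i]) (pmf_of_set {..<kap []})
      else do { b \<leftarrow> bernoulli_pmf (lam / (lam + real (kap x)));
                if b then return_pmf (butlast x)
                else map_pmf (\<lambda>i. x @ [i]) (pmf_of_set {..<kap x}) })"

text \<open>Underlying probability space of the branching random walk: for every
  Ulam-Harris individual u an offspring number N u ~ mu, and independent
  random step maps R u with R u y ~ step y (used as the displacement of u
  from its parent's position y); everything independent.\<close>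
definition brw_space ::
  "real \<Rightarrow> (nat list \<Rightarrow> nat) \<Rightarrow> nat pmf \<Rightarrow>
   ((nat list \<Rightarrow> nat) \<times> (nat list \<Rightarrow> nat list \<Rightarrow> nat list)) measure" where
  "brw_space lam kap \<mu> =
     (PiM UNIV (\<lambda>_::nat list. measure_pmf \<mu>)) \<Otimes>\<^sub>M
     (PiM UNIV (\<lambda>_::nat list. PiM UNIV (\<lambda>y. measure_pmf (step lam kap y))))"

definition alive :: "(nat list \<Rightarrow> nat) \<Rightarrow> nat list \<Rightarrow> bool" where
  "alive N u = (\<forall>i<length u. u ! i < N (take i u))"

fun pos_aux :: "(nat list \<Rightarrow> nat list \<Rightarrow> nat list) \<Rightarrow> nat list \<Rightarrow> nat list \<Rightarrow> nat list \<Rightarrow> nat list" where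
  "pos_aux R v y [] = y"
| "pos_aux R v y (i # is) = pos_aux R (v @ [i]) (R (v @ [i]) y) is"

definition pos :: "(nat list \<Rightarrow> nat list \<Rightarrow> nat list) \<Rightarrow> nat list \<Rightarrow> nat list \<Rightarrow> nat list" where
  "pos R x u = pos_aux R [] x u"

definition gen :: "(nat list \<Rightarrow> nat) \<Rightarrow> nat \<Rightarrow> nat list set" where
  "gen N n = {u. alive N u \<and> length u = n}"

definition recurrent_event :: "nat list \<Rightarrow> ((nat list \<Rightarrow> nat) \<times> (nat list \<Rightarrow> nat list \<Rightarrow> nat list)) set" where
  "recurrent_event x = {w. \<forall>n. \<exists>u. alive (fst w) u \<and> length u \<ge> n \<and> pos (snd w) x u = x}"

definition speed_event :: "real \<Rightarrow> nat list \<Rightarrow> ((nat list \<Rightarrow> nat) \<times> (nat list \<Rightarrow> nat list \<Rightarrow> nat list)) set" where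
  "speed_event a x = {w. liminf (\<lambda>n. SUP u\<in>gen (fst w) n. ereal (real (length (pos (snd w) x u)) / real n)) \<ge> ereal a}"

definition q :: "real \<Rightarrow> (nat list \<Rightarrow> nat) \<Rightarrow> nat pmf \<Rightarrow> real \<Rightarrow> nat list \<Rightarrow> real" where
  "q lam kap \<mu> a x = measure (brw_space lam kap \<mu>) (speed_event a x)"

end

theory Submission
  imports Defs
begin

abbreviation "PN \<mu> \<equiv> PiM (UNIV::nat list set) (\<lambda>_. measure_pmf \<mu>)"
abbreviation "PQ lam kap \<equiv> PiM (UNIV::nat list set) (\<lambda>y. measure_pmf (step lam kap y))"
abbreviation "PR lam kap \<equiv> PiM (UNIV::nat list set) (\<lambda>_::nat list. PQ lam kap)"

lemma brw_space_eq: "brw_space lam kap \<mu> = PN \<mu> \<Otimes>\<^sub>M PR lam kap"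
  unfolding brw_space_def ..

lemma prob_PN: "prob_space (PN \<mu>)"
  by (intro prob_space_PiM measure_pmf.prob_space_axioms)

lemma prob_PQ: "prob_space (PQ lam kap)"
  by (intro prob_space_PiM measure_pmf.prob_space_axioms)

lemma prob_PR: "prob_space (PR lam kap)"
  by (intro prob_space_PiM prob_PQ)

lemma prob_brw: "prob_space (brw_space lam kap \<mu>)"
  unfolding brw_space_eq
  by (intro prob_space_pair prob_PN prob_PR)

lemma space_PN[simp]: "space (PN \<mu>) = UNIV"
  by (auto simp: space_PiM)

lemma space_PQ[simp]: "space (PQ lam kap) = UNIV"
  by (auto simp: space_PiM)

lemma space_PR[simp]: "space (PR lam kap) = UNIV"
  by (auto simp: space_PiM)

lemma space_brw[simp]: "space (brw_space lam kap \<mu>) = UNIV"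
  by (simp add: brw_space_eq space_pair_measure)

lemma meas_N[measurable]: "(\<lambda>W. fst W u) \<in> measurable (brw_space lam kap \<mu>) (count_space UNIV)"
proof -
  have "(\<lambda>W. W u) \<in> measurable (PN \<mu>) (measure_pmf \<mu>)"
    by (rule measurable_component_singleton) simp
  then have "(\<lambda>W. W u) \<in> measurable (PN \<mu>) (count_space UNIV)"
    by (simp cong: measurable_cong_sets)
  then show ?thesis unfolding brw_space_eq
    by (rule measurable_compose[OF measurable_fst])
qed

lemma meas_R[measurable]: "(\<lambda>W. snd W u y) \<in> measurable (brw_space lam kap \<mu>) (count_space UNIV)"
proof -
  have "(\<lambda>W. W u) \<in> measurable (PR lam kap) (PQ lam kap)"
    by (rule measurable_component_singleton) simp
  moreover have "(\<lambda>W. W y) \<in> measurable (PQ lam kap) (measure_pmf (step lam kap y))"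
    by (rule measurable_component_singleton) simp
  then have "(\<lambda>W. W y) \<in> measurable (PQ lam kap) (count_space UNIV)"
    by (simp cong: measurable_cong_sets)
  ultimately have "(\<lambda>W. W u y) \<in> measurable (PR lam kap) (count_space UNIV)"
    by (rule measurable_compose)
  then show ?thesis unfolding brw_space_eq
    by (rule measurable_compose[OF measurable_snd])
qed

lemma meas_pos_aux:
  "f \<in> measurable (brw_space lam kap \<mu>) (count_space UNIV) \<Longrightarrow>
   (\<lambda>W. pos_aux (snd W) v (f W) is) \<in> measurable (brw_space lam kap \<mu>) (count_space UNIV)"
proof (induction "is" arbitrary: v f)
  case Nil then show ?case by simp
next
  case (Cons i "is")
  have "(\<lambda>W. snd W (v @ [i]) (f W)) \<in> measurable (brw_space lam kap \<mu>) (count_space UNIV)"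
    using measurable_compose_countable[where f="\<lambda>y W. snd W (v @ [i]) y", OF meas_R Cons.prems] .
  from Cons.IH[OF this] show ?case by simp
qed

lemma meas_pos[measurable]:
  "(\<lambda>W. pos (snd W) y u) \<in> measurable (brw_space lam kap \<mu>) (count_space UNIV)"
  unfolding pos_def by (rule meas_pos_aux) simp

lemma pred_cnt: assumes f: "f \<in> measurable M (count_space UNIV)" shows "Measurable.pred M (\<lambda>x. P (f x))"
  by (rule measurable_compose[OF f]) simp

lemma pred_N[measurable]: "Measurable.pred (brw_space lam kap \<mu>) (\<lambda>W. P (fst W u))"
  by (rule pred_cnt[OF meas_N])

lemma pred_pos[measurable]: "Measurable.pred (brw_space lam kap \<mu>) (\<lambda>W. P (pos (snd W) y u))"
  by (rule pred_cnt[OF meas_pos])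

lemma pred_alive[measurable]: "Measurable.pred (brw_space lam kap \<mu>) (\<lambda>W. alive (fst W) u)"
proof -
  have eq: "(\<lambda>W. alive (fst W) u) = (\<lambda>W. \<forall>i\<in>{..<length u}. u!i < fst W (take i u))"
    unfolding alive_def by auto
  moreover have "Measurable.pred (brw_space lam kap \<mu>) (\<lambda>W. \<forall>i\<in>{..<length u}. u!i < fst W (take i u))"
    by (intro pred_intros_finite pred_N) auto
  ultimately show ?thesis by (subst eq)
qed

lemma prod_emb_UNIV_eq:
  assumes "\<And>i. space (M i) = UNIV"
  shows "prod_emb UNIV M J (Pi\<^sub>E J A) = {x. \<forall>i\<in>J. x i \<in> A i}"
  using assms by (auto simp: prod_emb_def space_PiM PiE_iff)

lemma meas_merge_iid:
  fixes K :: "'b measure" and S :: "'i set" and f :: "'i \<Rightarrow> 'i"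
  assumes spK: "space K = UNIV"
  shows "(\<lambda>(x,y). \<lambda>i. if i \<in> S then y (f i) else x i) \<in>
     measurable (PiM UNIV (\<lambda>_. K) \<Otimes>\<^sub>M PiM UNIV (\<lambda>_. K)) (PiM UNIV (\<lambda>_. K))"
    (is "?g \<in> measurable ?PP ?P")
proof (rule measurable_PiM_single')
  fix i :: 'i
  show "(\<lambda>\<omega>. ?g \<omega> i) \<in> measurable ?PP K"
  proof (cases "i \<in> S")
    case True
    have "(\<lambda>\<omega>. snd \<omega> (f i)) \<in> measurable ?PP K" by measurable
    then show ?thesis using True by (simp add: case_prod_beta)
  next
    case False
    have "(\<lambda>\<omega>. fst \<omega> i) \<in> measurable ?PP K" by measurable
    then show ?thesis using False by (simp add: case_prod_beta)
  qed
qed (auto simp: space_PiM spK)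

lemma distr_merge_iid:
  fixes K :: "'b measure" and S :: "'i set" and f :: "'i \<Rightarrow> 'i"
  assumes K: "prob_space K" and spK: "space K = UNIV" and f: "inj_on f S"
  shows "distr (PiM UNIV (\<lambda>_. K) \<Otimes>\<^sub>M PiM UNIV (\<lambda>_. K)) (PiM UNIV (\<lambda>_. K))
           (\<lambda>(x,y). \<lambda>i. if i \<in> S then y (f i) else x i) = PiM UNIV (\<lambda>_. K)"
    (is "distr ?PP ?P ?g = ?P")
proof (rule measure_eqI_PiM_infinite[symmetric, OF refl])
  interpret P: prob_space ?P using K by (intro prob_space_PiM) auto
  interpret PP: pair_prob_space ?P ?P by unfold_locales
  show "finite_measure ?P" by unfold_locales
  have g: "?g \<in> measurable ?PP ?P"
  proof (rule measurable_PiM_single')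
    fix i :: 'i
    show "(\<lambda>\<omega>. ?g \<omega> i) \<in> measurable ?PP K"
    proof (cases "i \<in> S")
      case True
      have "(\<lambda>\<omega>. snd \<omega> (f i)) \<in> measurable ?PP K" by measurable
      then show ?thesis using True by (simp add: case_prod_beta)
    next
      case False
      have "(\<lambda>\<omega>. fst \<omega> i) \<in> measurable ?PP K" by measurable
      then show ?thesis using False by (simp add: case_prod_beta)
    qed
  qed (auto simp: space_PiM spK)
  show "sets (distr ?PP ?P ?g) = sets ?P" by simp
  fix A and J :: "'i set" assume J: "finite J" and A: "\<And>i. i \<in> J \<Longrightarrow> A i \<in> sets K"
  have spP: "\<And>i. space ((\<lambda>_. K) i) = UNIV" using spK by simp
  define J2 where "J2 = f ` (J \<inter> S)"
  define A2 where "A2 = (\<lambda>j. A (the_inv_into S f j))"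
  have inv: "i \<in> J \<inter> S \<Longrightarrow> the_inv_into S f (f i) = i" for i
    using f by (intro the_inv_into_f_f) auto
  have pre: "?g -` prod_emb UNIV (\<lambda>_. K) J (Pi\<^sub>E J A) \<inter> space ?PP =
     prod_emb UNIV (\<lambda>_. K) (J - S) (Pi\<^sub>E (J - S) A) \<times> prod_emb UNIV (\<lambda>_. K) J2 (Pi\<^sub>E J2 A2)"
    unfolding prod_emb_UNIV_eq[OF spP] J2_def A2_def
    by (auto simp: space_pair_measure inv space_PiM spK)
  have m1: "prod_emb UNIV (\<lambda>_. K) (J - S) (Pi\<^sub>E (J - S) A) \<in> sets ?P"
    using J A by (intro sets_PiM_I) auto
  have m2: "prod_emb UNIV (\<lambda>_. K) J2 (Pi\<^sub>E J2 A2) \<in> sets ?P"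
    using J A unfolding J2_def A2_def by (intro sets_PiM_I) (auto simp: inv)
  have "distr ?PP ?P ?g (prod_emb UNIV (\<lambda>_. K) J (Pi\<^sub>E J A))
      = emeasure ?PP (?g -` prod_emb UNIV (\<lambda>_. K) J (Pi\<^sub>E J A) \<inter> space ?PP)"
    using J A by (intro emeasure_distr g sets_PiM_I) auto
  also have "\<dots> = emeasure ?P (prod_emb UNIV (\<lambda>_. K) (J - S) (Pi\<^sub>E (J - S) A)) *
                  emeasure ?P (prod_emb UNIV (\<lambda>_. K) J2 (Pi\<^sub>E J2 A2))"
    unfolding pre by (rule P.emeasure_pair_measure_Times[OF m1 m2])
  also have "\<dots> = (\<Prod>i\<in>J - S. emeasure K (A i)) * (\<Prod>j\<in>J2. emeasure K (A2 j))"
    using J A K unfolding J2_def A2_def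
    by (subst (1 2) emeasure_PiM_emb) (auto simp: inv)
  also have "(\<Prod>j\<in>J2. emeasure K (A2 j)) = (\<Prod>i\<in>J \<inter> S. emeasure K (A i))"
    unfolding J2_def A2_def using f
    by (subst prod.reindex) (auto intro: inj_on_subset simp: inv)
  also have "(\<Prod>i\<in>J - S. emeasure K (A i)) * \<dots> = (\<Prod>i\<in>J. emeasure K (A i))"
    using J by (metis Diff_Diff_Int Diff_subset prod.subset_diff inf_commute mult.commute)
  also have "\<dots> = emeasure ?P (prod_emb UNIV (\<lambda>_. K) J (Pi\<^sub>E J A))"
    using J A K by (subst emeasure_PiM_emb) auto
  finally show "emeasure ?P (prod_emb UNIV (\<lambda>_. K) J (Pi\<^sub>E J A)) =
      emeasure (distr ?PP ?P ?g) (prod_emb UNIV (\<lambda>_. K) J (Pi\<^sub>E J A))" by simp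
qed

lemma distr_rearr:
  assumes pA: "prob_space A" and pB: "prob_space B" and pC: "prob_space C" and pD: "prob_space D"
  shows "distr ((A \<Otimes>\<^sub>M B) \<Otimes>\<^sub>M (C \<Otimes>\<^sub>M D)) ((A \<Otimes>\<^sub>M C) \<Otimes>\<^sub>M (B \<Otimes>\<^sub>M D))
           (\<lambda>((a,b),(c,d)). ((a,c),(b,d))) = (A \<Otimes>\<^sub>M C) \<Otimes>\<^sub>M (B \<Otimes>\<^sub>M D)"
    (is "distr ?S ?T ?r = ?T")
proof (rule measure_eqI)
  interpret A: prob_space A by fact
  interpret B: prob_space B by fact
  interpret C: prob_space C by fact
  interpret D: prob_space D by fact
  interpret AB: pair_prob_space A B by unfold_locales
  interpret CD: pair_prob_space C D by unfold_locales
  interpret AC: pair_prob_space A C by unfold_locales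
  interpret BD: pair_prob_space B D by unfold_locales
  interpret BC: pair_prob_space B C by unfold_locales
  interpret S: pair_prob_space "A \<Otimes>\<^sub>M B" "C \<Otimes>\<^sub>M D" by unfold_locales
  interpret T: pair_prob_space "A \<Otimes>\<^sub>M C" "B \<Otimes>\<^sub>M D" by unfold_locales
  have req: "?r = (\<lambda>w. ((fst (fst w), fst (snd w)), (snd (fst w), snd (snd w))))"
    by (auto simp: fun_eq_iff)
  have r[measurable]: "?r \<in> measurable ?S ?T" unfolding req by measurable
  show "sets (distr ?S ?T ?r) = sets ?T" by simp
  fix X assume "X \<in> sets (distr ?S ?T ?r)"
  then have X[measurable]: "X \<in> sets ?T" by simp
  have "emeasure (distr ?S ?T ?r) X = (\<integral>\<^sup>+ w. indicator X (?r w) \<partial>?S)"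
    by (simp add: nn_integral_indicator[symmetric] nn_integral_distr del: nn_integral_indicator)
  also have "\<dots> = (\<integral>\<^sup>+ ab. \<integral>\<^sup>+ cd. indicator X (?r (ab, cd)) \<partial>(C \<Otimes>\<^sub>M D) \<partial>(A \<Otimes>\<^sub>M B))"
    by (rule CD.nn_integral_fst[symmetric]) measurable
  also have "\<dots> = (\<integral>\<^sup>+ ab. \<integral>\<^sup>+ c. \<integral>\<^sup>+ d. indicator X (?r (ab, (c, d))) \<partial>D \<partial>C \<partial>(A \<Otimes>\<^sub>M B))"
    by (intro nn_integral_cong D.nn_integral_fst[symmetric]) measurable
  also have "\<dots> = (\<integral>\<^sup>+ a. \<integral>\<^sup>+ b. \<integral>\<^sup>+ c. \<integral>\<^sup>+ d. indicator X ((a, c), (b, d)) \<partial>D \<partial>C \<partial>B \<partial>A)"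
    by (subst B.nn_integral_fst[symmetric]) (simp_all add: case_prod_beta)
  also have "\<dots> = (\<integral>\<^sup>+ a. \<integral>\<^sup>+ c. \<integral>\<^sup>+ b. \<integral>\<^sup>+ d. indicator X ((a, c), (b, d)) \<partial>D \<partial>B \<partial>C \<partial>A)"
    by (intro nn_integral_cong BC.Fubini'[symmetric]) measurable
  also have "\<dots> = (\<integral>\<^sup>+ a. \<integral>\<^sup>+ c. \<integral>\<^sup>+ bd. indicator X ((a, c), bd) \<partial>(B \<Otimes>\<^sub>M D) \<partial>C \<partial>A)"
    by (intro nn_integral_cong D.nn_integral_fst) measurable
  also have "\<dots> = (\<integral>\<^sup>+ ac. \<integral>\<^sup>+ bd. indicator X (ac, bd) \<partial>(B \<Otimes>\<^sub>M D) \<partial>(A \<Otimes>\<^sub>M C))"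
    by (subst C.nn_integral_fst[symmetric]) (simp_all add: case_prod_beta)
  also have "\<dots> = emeasure ?T X"
    by (rule BD.emeasure_pair_measure[symmetric]) simp
  finally show "emeasure (distr ?S ?T ?r) X = emeasure ?T X" .
qed

type_synonym brw = "(nat list \<Rightarrow> nat) \<times> (nat list \<Rightarrow> nat list \<Rightarrow> nat list)"

definition gN :: "nat list \<Rightarrow> (nat list \<Rightarrow> nat) \<times> (nat list \<Rightarrow> nat) \<Rightarrow> nat list \<Rightarrow> nat" where
  "gN v = (\<lambda>(x,y). \<lambda>i. if i \<in> {w. take (length v) w = v} then y (drop (length v) i) else x i)"

definition gR :: "nat list \<Rightarrow> (nat list \<Rightarrow> nat list \<Rightarrow> nat list) \<times> (nat list \<Rightarrow> nat list \<Rightarrow> nat list)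
     \<Rightarrow> nat list \<Rightarrow> nat list \<Rightarrow> nat list" where
  "gR v = (\<lambda>(x,y). \<lambda>i. if i \<in> {w. w = [] \<or> (take (length v) w = v \<and> length v < length w)}
            then y (drop (length v) i) else x i)"

definition mg :: "nat list \<Rightarrow> brw \<times> brw \<Rightarrow> brw" where
  "mg v = (\<lambda>((N1,R1),(N2,R2)). (gN v (N1,N2), gR v (R1,R2)))"

definition shift :: "nat list \<Rightarrow> brw \<Rightarrow> brw" where
  "shift v = (\<lambda>(N,R). (\<lambda>s. N (v@s), \<lambda>s. if s = [] then R [] else R (v@s)))"

lemma shift_mg: "shift v (mg v (w1, w2)) = w2"
  by (cases w1; cases w2) (auto simp: shift_def mg_def gN_def gR_def fun_eq_iff)

lemma inj_gN: "inj_on (drop (length v)) {w. take (length v) w = v}"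
  by (auto simp: inj_on_def) (metis append_take_drop_id)

lemma inj_gR: "inj_on (drop (length v)) {w. w = [] \<or> (take (length v) w = v \<and> length v < length w)}"
  by (auto simp: inj_on_def) (metis append_take_drop_id)+

lemma distr_mg:
  "distr (brw_space lam kap \<mu> \<Otimes>\<^sub>M brw_space lam kap \<mu>) (brw_space lam kap \<mu>) (mg v) = brw_space lam kap \<mu>"
proof -
  let ?r = "\<lambda>((a::nat list \<Rightarrow> nat,b::nat list \<Rightarrow> nat list \<Rightarrow> nat list),(c::nat list \<Rightarrow> nat,d::nat list \<Rightarrow> nat list \<Rightarrow> nat list)). ((a,c),(b,d))"
  let ?T = "(PN \<mu> \<Otimes>\<^sub>M PN \<mu>) \<Otimes>\<^sub>M (PR lam kap \<Otimes>\<^sub>M PR lam kap)"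
  have mN[measurable]: "gN v \<in> measurable (PN \<mu> \<Otimes>\<^sub>M PN \<mu>) (PN \<mu>)"
    unfolding gN_def by (rule meas_merge_iid) simp
  have mR[measurable]: "gR v \<in> measurable (PR lam kap \<Otimes>\<^sub>M PR lam kap) (PR lam kap)"
    unfolding gR_def by (rule meas_merge_iid) simp
  have dN: "distr (PN \<mu> \<Otimes>\<^sub>M PN \<mu>) (PN \<mu>) (gN v) = PN \<mu>"
    unfolding gN_def by (rule distr_merge_iid[OF measure_pmf.prob_space_axioms _ inj_gN]) simp
  have dR: "distr (PR lam kap \<Otimes>\<^sub>M PR lam kap) (PR lam kap) (gR v) = PR lam kap"
    unfolding gR_def by (rule distr_merge_iid[OF prob_PQ _ inj_gR]) simp
  have req: "?r = (\<lambda>w. ((fst (fst w), fst (snd w)), (snd (fst w), snd (snd w))))"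
    by (auto simp: fun_eq_iff)
  have r: "?r \<in> measurable (brw_space lam kap \<mu> \<Otimes>\<^sub>M brw_space lam kap \<mu>) ?T"
    unfolding req brw_space_eq by measurable
  have h: "(\<lambda>(x,y). (gN v x, gR v y)) \<in> measurable ?T (brw_space lam kap \<mu>)"
    unfolding brw_space_eq by measurable
  have mgeq: "mg v = (\<lambda>w. (\<lambda>(x,y). (gN v x, gR v y)) (?r w))"
    by (auto simp: mg_def fun_eq_iff)
  have "distr (brw_space lam kap \<mu> \<Otimes>\<^sub>M brw_space lam kap \<mu>) (brw_space lam kap \<mu>) (mg v)
      = distr (distr (brw_space lam kap \<mu> \<Otimes>\<^sub>M brw_space lam kap \<mu>) ?T ?r) (brw_space lam kap \<mu>) (\<lambda>(x,y). (gN v x, gR v y))"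
    by (subst distr_distr[OF h r]) (auto simp: comp_def mg_def fun_eq_iff split: prod.splits intro!: distr_cong)
  also have "distr (brw_space lam kap \<mu> \<Otimes>\<^sub>M brw_space lam kap \<mu>) ?T ?r = ?T"
    unfolding brw_space_eq by (intro distr_rearr prob_PN prob_PR)
  also have "distr ?T (brw_space lam kap \<mu>) (\<lambda>(x,y). (gN v x, gR v y))
      = distr (PN \<mu> \<Otimes>\<^sub>M PN \<mu>) (PN \<mu>) (gN v) \<Otimes>\<^sub>M distr (PR lam kap \<Otimes>\<^sub>M PR lam kap) (PR lam kap) (gR v)"
    unfolding brw_space_eq
    by (rule pair_measure_distr[symmetric, OF mN mR]) (simp add: dR prob_space_imp_sigma_finite[OF prob_PR])
  also have "\<dots> = brw_space lam kap \<mu>" unfolding dN dR brw_space_eq ..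
  finally show ?thesis .
qed

lemma factor_le:
  assumes G: "G \<in> sets (brw_space lam kap \<mu>)" and A: "A \<in> sets (brw_space lam kap \<mu>)"
    and F: "F \<in> sets (brw_space lam kap \<mu>)"
    and sub: "\<And>w1 w2. mg v (w1, w2) \<in> G \<Longrightarrow> w1 \<in> A \<and> w2 \<in> F"
  shows "emeasure (brw_space lam kap \<mu>) G \<le> emeasure (brw_space lam kap \<mu>) A * emeasure (brw_space lam kap \<mu>) F"
proof -
  let ?M = "brw_space lam kap \<mu>"
  interpret M: prob_space ?M by (rule prob_brw)
  interpret MM: pair_prob_space ?M ?M by unfold_locales
  have mgm: "mg v \<in> measurable (?M \<Otimes>\<^sub>M ?M) ?M"
  proof -
    have "distr (?M \<Otimes>\<^sub>M ?M) ?M (mg v) = ?M" by (rule distr_mg)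
    have "mg v = (\<lambda>w. (gN v (fst (fst w), fst (snd w)), gR v (snd (fst w), snd (snd w))))"
      by (auto simp: mg_def fun_eq_iff)
    moreover have "gN v \<in> measurable (PN \<mu> \<Otimes>\<^sub>M PN \<mu>) (PN \<mu>)"
      unfolding gN_def by (rule meas_merge_iid) simp
    moreover have "gR v \<in> measurable (PR lam kap \<Otimes>\<^sub>M PR lam kap) (PR lam kap)"
      unfolding gR_def by (rule meas_merge_iid) simp
    ultimately show ?thesis unfolding brw_space_eq by simp
  qed
  have "emeasure ?M G = emeasure (distr (?M \<Otimes>\<^sub>M ?M) ?M (mg v)) G"
    by (simp add: distr_mg)
  also have "\<dots> = emeasure (?M \<Otimes>\<^sub>M ?M) (mg v -` G \<inter> space (?M \<Otimes>\<^sub>M ?M))"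
    by (rule emeasure_distr[OF mgm G])
  also have "\<dots> \<le> emeasure (?M \<Otimes>\<^sub>M ?M) (A \<times> F)"
  proof (intro emeasure_mono)
    show "mg v -` G \<inter> space (?M \<Otimes>\<^sub>M ?M) \<subseteq> A \<times> F"
    proof
      fix w assume "w \<in> mg v -` G \<inter> space (?M \<Otimes>\<^sub>M ?M)"
      then have "mg v (fst w, snd w) \<in> G" by simp
      from sub[OF this] show "w \<in> A \<times> F" by (cases w) simp
    qed
  qed (use A F in simp)
  also have "\<dots> = emeasure ?M A * emeasure ?M F"
    by (rule M.emeasure_pair_measure_Times[OF A F])
  finally show ?thesis .
qed

definition sext :: "nat list \<Rightarrow> nat list \<Rightarrow> bool" where
  "sext v u \<longleftrightarrow> take (length v) u = v \<and> length v < length u"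

lemma pos_aux_cong:
  "(\<And>j. 0 < j \<Longrightarrow> j \<le> length is \<Longrightarrow> R (v @ take j is) = R' (v @ take j is)) \<Longrightarrow>
   pos_aux R v y is = pos_aux R' v y is"
proof (induction "is" arbitrary: v y)
  case Nil then show ?case by simp
next
  case (Cons i "is")
  have 1: "R (v @ [i]) = R' (v @ [i])" using Cons.prems[of 1] by simp
  have "pos_aux R (v @ [i]) y' is = pos_aux R' (v @ [i]) y' is" for y'
  proof (rule Cons.IH)
    fix j assume "0 < j" "j \<le> length is"
    then show "R ((v @ [i]) @ take j is) = R' ((v @ [i]) @ take j is)"
      using Cons.prems[of "Suc j"] by simp
  qed
  then show ?case by (simp add: 1)
qed

lemma pos_aux_append: "pos_aux R w y (u @ s) = pos_aux R (w @ u) (pos_aux R w y u) s"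
  by (induction u arbitrary: w y) auto

lemma pos_aux_shift:
  "(\<And>t. t \<noteq> [] \<Longrightarrow> R' t = R (v @ t)) \<Longrightarrow> pos_aux R (v @ t) z s = pos_aux R' t z s"
proof (induction s arbitrary: t z)
  case Nil then show ?case by simp
next
  case (Cons i s)
  have "pos_aux R (v @ t) z (i # s) = pos_aux R ((v @ t) @ [i]) (R (v @ t @ [i]) z) s" by simp
  also have "\<dots> = pos_aux R (v @ (t @ [i])) (R (v @ t @ [i]) z) s" by simp
  also have "\<dots> = pos_aux R' (t @ [i]) (R (v @ t @ [i]) z) s" by (rule Cons.IH[OF Cons.prems])
  also have "R (v @ t @ [i]) = R' (t @ [i])" using Cons.prems[of "t @ [i]"] by simp
  finally show ?case by simp
qed

lemma pos_snoc: "pos R y (u @ [i]) = R (u @ [i]) (pos R y u)"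
  unfolding pos_def by (simp add: pos_aux_append)

lemma take_take_sext:
  assumes "take (length v) (take i u) = v"
  shows "length v \<le> i \<and> take (length v) u = v"
proof -
  have "length (take (length v) (take i u)) = length v" using assms by simp
  then have le: "length v \<le> i" by simp
  then have "take (length v) (take i u) = take (length v) u" by (simp add: min_absorb1)
  then show ?thesis using assms le by simp
qed

lemma alive_mg: "\<not> sext v u \<Longrightarrow> alive (fst (mg v (w1, w2))) u = alive (fst w1) u"
proof -
  assume ns: "\<not> sext v u"
  obtain N1 R1 N2 R2 where w: "w1 = (N1, R1)" "w2 = (N2, R2)" by (cases w1, cases w2)
  have "take (length v) (take i u) \<noteq> v" if "i < length u" for i
  proof
    assume "take (length v) (take i u) = v"
    from take_take_sext[OF this] that ns show False unfolding sext_def by simp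
  qed
  then have "\<forall>i<length u. gN v (N1, N2) (take i u) = N1 (take i u)"
    by (simp add: gN_def)
  moreover have "fst (mg v (w1, w2)) = gN v (N1, N2)" by (simp add: w mg_def)
  ultimately show ?thesis unfolding alive_def using w by simp
qed

lemma gR_apply: "gR v (R1, R2) w = (if w = [] \<or> (take (length v) w = v \<and> length v < length w) then R2 (drop (length v) w) else R1 w)"
  by (simp add: gR_def)

lemma pos_mg: "\<not> sext v u \<Longrightarrow> pos (snd (mg v (w1, w2))) y u = pos (snd w1) y u"
proof -
  assume ns: "\<not> sext v u"
  obtain N1 R1 N2 R2 where w: "w1 = (N1, R1)" "w2 = (N2, R2)" by (cases w1, cases w2)
  have s: "snd (mg v (w1, w2)) = gR v (R1, R2)" by (simp add: w mg_def)
  have "pos (gR v (R1, R2)) y u = pos R1 y u" unfolding pos_def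
  proof (rule pos_aux_cong)
    fix j assume j: "0 < j" "j \<le> length u"
    have "\<not> (take (length v) (take j u) = v \<and> length v < length (take j u))"
    proof
      assume a: "take (length v) (take j u) = v \<and> length v < length (take j u)"
      from take_take_sext[OF conjunct1[OF a]] a j ns show False unfolding sext_def by simp
    qed
    moreover have "take j u \<noteq> []" using j by auto
    ultimately have "\<not> (take j u = [] \<or> (take (length v) (take j u) = v \<and> length v < length (take j u)))"
      by blast
    then show "gR v (R1, R2) ([] @ take j u) = R1 ([] @ take j u)"
      unfolding gR_apply append_Nil by (rule if_not_P)
  qed
  then show ?thesis using s w by simp
qed

lemma alive_append: "alive N (v @ s) \<longleftrightarrow> alive N v \<and> alive (\<lambda>t. N (v @ t)) s"
proof -
  have "alive N (v @ s) \<longleftrightarrow> (\<forall>i<length v. v ! i < N (take i v)) \<and>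
          (\<forall>j<length s. s ! j < N (v @ take j s))"
    unfolding alive_def
  proof safe
    fix i assume "\<forall>i<length (v @ s). (v @ s) ! i < N (take i (v @ s))" "i < length v"
    then show "v ! i < N (take i v)" by (auto simp: nth_append dest!: spec[of _ i])
  next
    fix j assume "\<forall>i<length (v @ s). (v @ s) ! i < N (take i (v @ s))" "j < length s"
    then show "s ! j < N (v @ take j s)" by (auto simp: nth_append dest!: spec[of _ "length v + j"])
  next
    fix i assume a: "\<forall>i<length v. v ! i < N (take i v)" "\<forall>j<length s. s ! j < N (v @ take j s)"
      and i: "i < length (v @ s)"
    show "(v @ s) ! i < N (take i (v @ s))"
    proof (cases "i < length v")
      case True then show ?thesis using a by (simp add: nth_append)
    next
      case False then show ?thesis using a(2)[rule_format, of "i - length v"] i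
        by (simp add: nth_append)
    qed
  qed
  then show ?thesis unfolding alive_def by simp
qed

lemma shift_fst: "fst (shift v W) = (\<lambda>s. fst W (v @ s))"
  by (cases W) (simp add: shift_def)

lemma pos_shift: "pos (snd W) y (v @ s) = pos (snd (shift v W)) (pos (snd W) y v) s"
proof -
  obtain N R where W: "W = (N, R)" by (cases W)
  have "pos R y (v @ s) = pos_aux R (v @ []) (pos R y v) s"
    unfolding pos_def by (simp add: pos_aux_append)
  also have "\<dots> = pos_aux (\<lambda>s. if s = [] then R [] else R (v @ s)) [] (pos R y v) s"
    by (rule pos_aux_shift) simp
  finally show ?thesis by (simp add: W shift_def pos_def)
qed

definition good :: "nat \<Rightarrow> nat list \<Rightarrow> nat list \<Rightarrow> brw \<Rightarrow> nat list \<Rightarrow> bool" where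
  "good L z y W u \<longleftrightarrow> alive (fst W) u \<and> L \<le> length u \<and> pos (snd W) y u = z"

definition before :: "nat list \<Rightarrow> nat list \<Rightarrow> bool" where
  "before u v \<longleftrightarrow> length u < length v \<or> (length u = length v \<and> to_nat u < to_nat v)"

definition Fset :: "nat \<Rightarrow> nat list \<Rightarrow> nat list \<Rightarrow> nat list \<Rightarrow> brw set" where
  "Fset L z y v = {W. good L z y W v \<and> (\<forall>u. before u v \<longrightarrow> \<not> good L z y W u)}"

lemma before_total: "u \<noteq> v \<Longrightarrow> before u v \<or> before v u"
  unfolding before_def by (metis linorder_neqE_nat to_nat_split)

lemma Fset_disj: "disjoint_family (Fset L z y)"
  unfolding disjoint_family_on_def Fset_def using before_total by blast

lemma Fset_cover:
  assumes "good L z y W u" shows "\<exists>v. W \<in> Fset L z y v"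
proof -
  let ?R = "{(a, b). before a b}"
  have sub: "?R \<subseteq> inv_image (less_than <*lex*> less_than) (\<lambda>u. (length u, to_nat u))"
    by (auto simp: before_def)
  have wf: "wf ?R"
    by (rule wf_subset[OF wf_inv_image[OF wf_lex_prod[OF wf_less_than wf_less_than]] sub])
  obtain v where v: "v \<in> {u. good L z y W u}" and vmin: "\<And>a. (a, v) \<in> ?R \<Longrightarrow> a \<notin> {u. good L z y W u}"
    using wfE_min[OF wf, of u "{u. good L z y W u}"] assms by blast
  have "W \<in> Fset L z y v" unfolding Fset_def using v vmin by blast
  then show ?thesis ..
qed

lemma before_not_sext: "before u v \<Longrightarrow> \<not> sext v u"
  unfolding before_def sext_def by auto

lemma good_mg: "\<not> sext v u \<Longrightarrow> good L z y (mg v (w1, w2)) u = good L z y w1 u"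
  unfolding good_def by (simp add: alive_mg pos_mg)

lemma Fset_mg: "mg v (w1, w2) \<in> Fset L z y v \<longleftrightarrow> w1 \<in> Fset L z y v"
proof -
  have "\<not> sext v v" by (simp add: sext_def)
  then show ?thesis unfolding Fset_def
    by (auto simp: good_mg before_not_sext)
qed

lemma pred_good[measurable]: "Measurable.pred (brw_space lam kap \<mu>) (\<lambda>W. good L z y W u)"
  unfolding good_def by measurable

lemma Fset_sets[measurable]: "Fset L z y v \<in> sets (brw_space lam kap \<mu>)"
proof -
  have "Fset L z y v = {W \<in> space (brw_space lam kap \<mu>). good L z y W v \<and> (\<forall>u. before u v \<longrightarrow> \<not> good L z y W u)}"
    by (auto simp: Fset_def)
  also have "\<dots> \<in> sets (brw_space lam kap \<mu>)" by measurable
  finally show ?thesis .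
qed

lemma decomp:
  assumes B: "B \<in> sets (brw_space lam kap \<mu>)" and D: "D \<in> sets (brw_space lam kap \<mu>)"
    and B': "B' \<in> sets (brw_space lam kap \<mu>)"
    and cover: "emeasure (brw_space lam kap \<mu>) (UNIV - (\<Union>v. Fset L z y v)) = 0"
    and hprop: "\<And>v w1 w2. mg v (w1, w2) \<in> B \<Longrightarrow> mg v (w1, w2) \<in> Fset L z y v \<Longrightarrow> w1 \<in> D \<and> w2 \<in> B'"
  shows "emeasure (brw_space lam kap \<mu>) B \<le> emeasure (brw_space lam kap \<mu>) D * emeasure (brw_space lam kap \<mu>) B'"
proof -
  let ?M = "brw_space lam kap \<mu>"
  let ?U = "\<Union>v. Fset L z y v"
  have U: "?U \<in> sets ?M" by measurable
  have Uc: "UNIV - ?U \<in> sets ?M" using sets.compl_sets[OF U] by simp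
  have "emeasure ?M B \<le> emeasure ?M ((B \<inter> ?U) \<union> (UNIV - ?U))"
    by (rule emeasure_mono) (use U B Uc in \<open>auto intro!: sets.Un sets.Int\<close>)
  also have "\<dots> \<le> emeasure ?M (B \<inter> ?U) + emeasure ?M (UNIV - ?U)"
    by (rule emeasure_subadditive) (use U B Uc in \<open>auto intro!: sets.Un sets.Int\<close>)
  also have "\<dots> = emeasure ?M (\<Union>v. B \<inter> Fset L z y v)" by (simp add: cover)
  also have "\<dots> = (\<integral>\<^sup>+v. emeasure ?M (B \<inter> Fset L z y v) \<partial>count_space UNIV)"
  proof (rule emeasure_UN_countable)
    show "disjoint_family_on (\<lambda>v. B \<inter> Fset L z y v) UNIV"
      using Fset_disj[of L z y] unfolding disjoint_family_on_def by blast
  qed (use B in auto)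
  also have "\<dots> \<le> (\<integral>\<^sup>+v. emeasure ?M (D \<inter> Fset L z y v) * emeasure ?M B' \<partial>count_space UNIV)"
  proof (rule nn_integral_mono)
    fix v
    show "emeasure ?M (B \<inter> Fset L z y v) \<le> emeasure ?M (D \<inter> Fset L z y v) * emeasure ?M B'"
    proof (rule factor_le)
      fix w1 w2 assume "mg v (w1, w2) \<in> B \<inter> Fset L z y v"
      then show "w1 \<in> D \<inter> Fset L z y v \<and> w2 \<in> B'"
        using hprop[of v w1 w2] Fset_mg[of v w1 w2 L z y] by blast
    qed (use B D B' in auto)
  qed
  also have "\<dots> = (\<integral>\<^sup>+v. emeasure ?M (D \<inter> Fset L z y v) \<partial>count_space UNIV) * emeasure ?M B'"
    by (rule nn_integral_multc) simp
  also have "(\<integral>\<^sup>+v. emeasure ?M (D \<inter> Fset L z y v) \<partial>count_space UNIV) = emeasure ?M (\<Union>v. D \<inter> Fset L z y v)"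
  proof (rule emeasure_UN_countable[symmetric])
    show "disjoint_family_on (\<lambda>v. D \<inter> Fset L z y v) UNIV"
      using Fset_disj[of L z y] unfolding disjoint_family_on_def by blast
  qed (use D in auto)
  also have "emeasure ?M (\<Union>v. D \<inter> Fset L z y v) \<le> emeasure ?M D"
    by (rule emeasure_mono) (use D in auto)
  finally show ?thesis by (simp add: mult_right_mono)
qed

lemma pred_R[measurable]: "Measurable.pred (brw_space lam kap \<mu>) (\<lambda>W. P (snd W u y))"
  by (rule pred_cnt[OF meas_R])

definition NH :: "nat list \<Rightarrow> nat list \<Rightarrow> brw set" where
  "NH y z = {W. \<forall>u. alive (fst W) u \<longrightarrow> pos (snd W) y u \<noteq> z}"

lemma NH_sets[measurable]: "NH y z \<in> sets (brw_space lam kap \<mu>)"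
proof -
  have "NH y z = {W \<in> space (brw_space lam kap \<mu>). \<forall>u. alive (fst W) u \<longrightarrow> pos (snd W) y u \<noteq> z}"
    by (auto simp: NH_def)
  also have "\<dots> \<in> sets (brw_space lam kap \<mu>)" by measurable
  finally show ?thesis .
qed

lemma rec_sets[measurable]: "recurrent_event x \<in> sets (brw_space lam kap \<mu>)"
proof -
  have "recurrent_event x = {W \<in> space (brw_space lam kap \<mu>). \<forall>n. \<exists>u. alive (fst W) u \<and> length u \<ge> n \<and> pos (snd W) x u = x}"
    by (auto simp: recurrent_event_def)
  also have "\<dots> \<in> sets (brw_space lam kap \<mu>)" by measurable
  finally show ?thesis .
qed

lemma pos_replicate:
  assumes p0: "p 0 = y" and st: "\<forall>j<k. R (replicate (Suc j) 0) (p j) = p (Suc j)"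
  shows "j \<le> k \<Longrightarrow> pos R y (replicate j 0) = p j"
proof (induction j)
  case 0 then show ?case using p0 by (simp add: pos_def)
next
  case (Suc j)
  have "replicate (Suc j) (0::nat) = replicate j 0 @ [0]" by (simp add: replicate_append_same)
  then have "pos R y (replicate (Suc j) 0) = R (replicate (Suc j) 0) (pos R y (replicate j 0))"
    by (metis pos_snoc)
  then show ?case using Suc st by simp
qed

lemma alive_replicate: "(\<forall>j<k. 1 \<le> N (replicate j 0)) \<Longrightarrow> alive N (replicate k 0)"
  unfolding alive_def by (auto simp: take_replicate min_def)

lemma ennreal_prod_pos: "(\<And>a. a \<in> A \<Longrightarrow> 0 < f a) \<Longrightarrow> 0 < (\<Prod>a\<in>A. f a :: ennreal)"
  by (induct A rule: infinite_finite_induct) (auto simp: ennreal_zero_less_mult_iff)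

lemma cyl_pos:
  assumes mu0: "pmf \<mu> 0 = 0"
    and steps: "\<forall>j<k. p (Suc j) \<in> set_pmf (step lam kap (p j))"
  shows "0 < emeasure (brw_space lam kap \<mu>)
     ({N. \<forall>j<k. 1 \<le> N (replicate j 0)} \<times> {R. \<forall>j<k. R (replicate (Suc j) 0) (p j) = p (Suc j)})"
proof -
  interpret PR: prob_space "PR lam kap" by (rule prob_PR)
  define JN where "JN = (\<lambda>j. replicate j (0::nat)) ` {..<k}"
  define JR where "JR = (\<lambda>j. replicate (Suc j) (0::nat)) ` {..<k}"
  define BR where "BR = (\<lambda>w::nat list. {r::nat list \<Rightarrow> nat list. r (p (length w - 1)) = p (length w)})"
  have CN: "{N. \<forall>j<k. 1 \<le> N (replicate j 0)} = prod_emb UNIV (\<lambda>_. measure_pmf \<mu>) JN (Pi\<^sub>E JN (\<lambda>_. {n. 1 \<le> n}))"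
    by (subst prod_emb_UNIV_eq) (auto simp: JN_def)
  have CR: "{R. \<forall>j<k. R (replicate (Suc j) 0) (p j) = p (Suc j)} = prod_emb UNIV (\<lambda>_. PQ lam kap) JR (Pi\<^sub>E JR BR)"
    by (subst prod_emb_UNIV_eq) (auto simp: JR_def BR_def)
  have BR: "BR w = prod_emb UNIV (\<lambda>y. measure_pmf (step lam kap y)) {p (length w - 1)}
             (Pi\<^sub>E {p (length w - 1)} (\<lambda>_. {p (length w)}))" for w
    by (subst prod_emb_UNIV_eq) (auto simp: BR_def)
  have BRs: "BR w \<in> sets (PQ lam kap)" for w
    unfolding BR by (intro sets_PiM_I) auto
  have sN: "{N. \<forall>j<k. 1 \<le> N (replicate j 0)} \<in> sets (PN \<mu>)"
    unfolding CN by (intro sets_PiM_I) (auto simp: JN_def)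
  have sR: "{R. \<forall>j<k. R (replicate (Suc j) 0) (p j) = p (Suc j)} \<in> sets (PR lam kap)"
    unfolding CR by (intro sets_PiM_I) (auto simp: JR_def BRs)
  have eN: "emeasure (PN \<mu>) (prod_emb UNIV (\<lambda>_. measure_pmf \<mu>) JN (Pi\<^sub>E JN (\<lambda>_. {n. 1 \<le> n}))) =
      (\<Prod>i\<in>JN. emeasure (measure_pmf \<mu>) {n. 1 \<le> n})"
    by (rule emeasure_PiM_emb) (auto simp: JN_def measure_pmf.prob_space_axioms)
  have "emeasure (measure_pmf \<mu>) (set_pmf \<mu>) \<le> emeasure (measure_pmf \<mu>) {n. 1 \<le> n}"
  proof (rule emeasure_mono)
    show "set_pmf \<mu> \<subseteq> {n. 1 \<le> n}" using mu0 by (auto simp: set_pmf_iff) (metis Suc_leI gr0I)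
  qed simp
  then have pN: "0 < emeasure (measure_pmf \<mu>) {n. 1 \<le> n}" by (simp add: emeasure_pmf) (metis order.strict_trans2 zero_less_one)
  have eR: "emeasure (PR lam kap) (prod_emb UNIV (\<lambda>_. PQ lam kap) JR (Pi\<^sub>E JR BR)) =
      (\<Prod>i\<in>JR. emeasure (PQ lam kap) (BR i))"
    by (rule emeasure_PiM_emb) (auto simp: JR_def BRs prob_PQ)
  have pR: "0 < emeasure (PQ lam kap) (BR w)" if w: "w \<in> JR" for w
  proof -
    obtain j where j: "j < k" "w = replicate (Suc j) 0" using w by (auto simp: JR_def)
    have "emeasure (PQ lam kap) (BR w) = (\<Prod>i\<in>{p (length w - 1)}. emeasure (measure_pmf (step lam kap i)) {p (length w)})"
      unfolding BR by (rule emeasure_PiM_emb) (auto simp: measure_pmf.prob_space_axioms)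
    also have "\<dots> = ennreal (pmf (step lam kap (p j)) (p (Suc j)))"
      using j by (simp add: emeasure_pmf_single)
    also have "\<dots> > 0" using steps j by (simp add: pmf_positive_iff)
    finally show ?thesis .
  qed
  have "emeasure (brw_space lam kap \<mu>)
     ({N. \<forall>j<k. 1 \<le> N (replicate j 0)} \<times> {R. \<forall>j<k. R (replicate (Suc j) 0) (p j) = p (Suc j)})
     = emeasure (PN \<mu>) {N. \<forall>j<k. 1 \<le> N (replicate j 0)} * emeasure (PR lam kap) {R. \<forall>j<k. R (replicate (Suc j) 0) (p j) = p (Suc j)}"
    unfolding brw_space_eq
    by (rule PR.emeasure_pair_measure_Times[OF sN sR])
  also have "\<dots> = (\<Prod>i\<in>JN. emeasure (measure_pmf \<mu>) {n. 1 \<le> n}) * (\<Prod>i\<in>JR. emeasure (PQ lam kap) (BR i))"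
    unfolding CN CR eN eR ..
  also have "\<dots> > 0"
  proof -
    have a: "0 < (\<Prod>i\<in>JN. emeasure (measure_pmf \<mu>) {n. 1 \<le> n})" by (rule ennreal_prod_pos) (rule pN)
    have b: "0 < (\<Prod>i\<in>JR. emeasure (PQ lam kap) (BR i))" by (rule ennreal_prod_pos) (rule pR)
    show ?thesis using a b by (simp only: ennreal_zero_less_mult_iff)
  qed
  finally show ?thesis .
qed

lemma hit_as:
  assumes recur: "measure (brw_space lam kap \<mu>) (recurrent_event y) = 1"
    and p0: "p 0 = y" and pk: "p k = z" and steps: "\<forall>j<k. p (Suc j) \<in> set_pmf (step lam kap (p j))"
    and mu0: "pmf \<mu> 0 = 0"
  shows "emeasure (brw_space lam kap \<mu>) (NH y z) = 0"
proof -
  let ?M = "brw_space lam kap \<mu>"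
  let ?r = "replicate k (0::nat)"
  let ?L = "Suc k"
  interpret M: prob_space ?M by (rule prob_brw)
  define Path where "Path = {W. alive (fst W) ?r \<and> pos (snd W) y ?r = z}"
  have Path_sets: "Path \<in> sets ?M"
  proof -
    have "Path = {W \<in> space ?M. alive (fst W) ?r \<and> pos (snd W) y ?r = z}" by (simp add: Path_def)
    also have "\<dots> \<in> sets ?M" by measurable
    finally show ?thesis .
  qed
  define Cyl :: "brw set" where "Cyl = {N. \<forall>j<k. 1 \<le> N (replicate j 0)} \<times> {R. \<forall>j<k. R (replicate (Suc j) 0) (p j) = p (Suc j)}"
  have cpos: "0 < emeasure ?M Cyl" unfolding Cyl_def by (rule cyl_pos[OF mu0 steps])
  have "Cyl \<subseteq> Path"
  proof
    fix W assume "W \<in> Cyl"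
    then obtain N R where W: "W = (N, R)" and c1: "\<forall>j<k. 1 \<le> N (replicate j 0)"
      and c2: "\<forall>j<k. R (replicate (Suc j) 0) (p j) = p (Suc j)" by (auto simp: Cyl_def)
    have "alive N ?r" by (rule alive_replicate[OF c1])
    moreover have "pos R y ?r = z" using pos_replicate[OF p0 c2, of k] pk by simp
    ultimately show "W \<in> Path" by (simp add: W Path_def)
  qed
  then have "emeasure ?M Cyl \<le> emeasure ?M Path" by (rule emeasure_mono) (rule Path_sets)
  with cpos have ppos: "0 < measure ?M Path" by (simp add: M.emeasure_eq_measure)
  have cover: "emeasure ?M (UNIV - (\<Union>v. Fset ?L y y v)) = 0"
  proof -
    have "UNIV - (\<Union>v. Fset ?L y y v) \<subseteq> space ?M - recurrent_event y"
    proof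
      fix W assume "W \<in> UNIV - (\<Union>v. Fset ?L y y v)"
      then have nf: "\<forall>v. W \<notin> Fset ?L y y v" by blast
      show "W \<in> space ?M - recurrent_event y"
      proof (simp, rule notI)
      assume W: "W \<in> recurrent_event y"
      from W obtain u where "alive (fst W) u" "length u \<ge> ?L" "pos (snd W) y u = y"
        unfolding recurrent_event_def by blast
      then have "good ?L y y W u" by (simp add: good_def)
      from Fset_cover[OF this] nf show False by blast
      qed
    qed
    moreover have "emeasure ?M (space ?M - recurrent_event y) = 0"
      using M.prob_compl[OF rec_sets] recur by (simp add: M.emeasure_eq_measure)
    ultimately show ?thesis
      by (metis (no_types, lifting) emeasure_eq_0 rec_sets sets.compl_sets)
  qed
  have key: "emeasure ?M (NH y z) \<le> emeasure ?M (UNIV - Path) * emeasure ?M (NH y z)"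
  proof (rule decomp[OF NH_sets _ NH_sets cover])
    show "UNIV - Path \<in> sets ?M" using sets.compl_sets[OF Path_sets] by simp
  next
    fix v w1 w2
    assume a1: "mg v (w1, w2) \<in> NH y z" and a2: "mg v (w1, w2) \<in> Fset ?L y y v"
    let ?W = "mg v (w1, w2)"
    from a2 have g: "alive (fst ?W) v" "?L \<le> length v" "pos (snd ?W) y v = y"
      by (auto simp: Fset_def good_def)
    have ns: "\<not> sext v ?r" using g(2) by (simp add: sext_def)
    have "w1 \<notin> Path"
    proof
      assume "w1 \<in> Path"
      then have "alive (fst ?W) ?r \<and> pos (snd ?W) y ?r = z"
        by (simp add: Path_def alive_mg[OF ns] pos_mg[OF ns])
      with a1 show False by (auto simp: NH_def)
    qed
    moreover have "w2 \<in> NH y z"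
    proof -
      have w2: "shift v ?W = w2" by (rule shift_mg)
      have fs: "fst w2 = (\<lambda>t. fst ?W (v @ t))" using shift_fst[of v ?W] w2 by simp
      { fix s assume al: "alive (fst w2) s" and ps: "pos (snd w2) y s = z"
        have "alive (fst ?W) (v @ s)"
          using al g(1) fs alive_append[of "fst ?W" v s] by simp
        moreover have "pos (snd ?W) y (v @ s) = z"
          using ps g(3) w2 pos_shift[of ?W y v s] by simp
        ultimately have False using a1 by (auto simp: NH_def) }
      then show ?thesis by (auto simp: NH_def)
    qed
    ultimately show "w1 \<in> UNIV - Path \<and> w2 \<in> NH y z" by simp
  qed
  have cP: "measure ?M (UNIV - Path) = 1 - measure ?M Path"
    using M.prob_compl[OF Path_sets] by simp
  let ?g = "measure ?M (NH y z)"
  let ?c = "measure ?M (UNIV - Path)"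
  from key have "ennreal ?g \<le> ennreal ?c * ennreal ?g"
    by (simp add: M.emeasure_eq_measure)
  then have "ennreal ?g \<le> ennreal (?c * ?g)" by (simp add: ennreal_mult)
  then have le: "?g \<le> ?c * ?g" by (simp add: ennreal_le_iff)
  have "?c < 1" using cP ppos by simp
  then have "?g = 0" using le measure_nonneg[of ?M "NH y z"]
    by (smt (verit) mult_less_cancel_right2)
  then show ?thesis by (simp add: M.emeasure_eq_measure)
qed

definition SE :: "real \<Rightarrow> nat list \<Rightarrow> brw \<Rightarrow> bool" where
  "SE a y W \<longleftrightarrow> (\<forall>c::rat. real_of_rat c < a \<longrightarrow> (\<exists>n0. \<forall>n\<ge>n0. \<exists>u. alive (fst W) u \<and> length u = n \<and>
      real_of_rat c < real (length (pos (snd W) y u)) / real n))"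

lemma rat_between:
  assumes "b < ereal a" shows "\<exists>c::rat. b < ereal (real_of_rat c) \<and> real_of_rat c < a"
proof -
  obtain r where r: "b < ereal r" "r < a"
  proof (cases b)
    case (real r')
    with assms have "r' < a" by simp
    then have "b < ereal ((r' + a) / 2)" "(r' + a) / 2 < a" using real by auto
    then show ?thesis by (rule that)
  next
    case PInf with assms show ?thesis by simp
  next
    case MInf
    have "b < ereal (a - 1)" using MInf by simp
    then show ?thesis by (rule that) simp
  qed
  from Rats_dense_in_real[OF r(2)] obtain q where q: "q \<in> \<rat>" "r < q" "q < a" by blast
  from q(1) obtain c where c: "q = real_of_rat c" by (rule Rats_cases)
  have "b < ereal q" using r(1) q(2) by (simp add: order.strict_trans)
  then show ?thesis using c q(3) by blast
qed

lemma speed_eq: "speed_event a y = {W. SE a y W}"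
proof (intro set_eqI iffI; simp)
  fix W assume "W \<in> speed_event a y"
  then have L: "ereal a \<le> liminf (\<lambda>n. SUP u\<in>gen (fst W) n. ereal (real (length (pos (snd W) y u)) / real n))"
    by (simp add: speed_event_def)
  show "SE a y W" unfolding SE_def
  proof (intro allI impI)
    fix c :: rat assume "real_of_rat c < a"
    then have "ereal (real_of_rat c) < ereal a" by simp
    with L have "eventually (\<lambda>n. ereal (real_of_rat c) < (SUP u\<in>gen (fst W) n. ereal (real (length (pos (snd W) y u)) / real n))) sequentially"
      unfolding le_Liminf_iff by blast
    then obtain n0 where n0: "\<forall>n\<ge>n0. ereal (real_of_rat c) < (SUP u\<in>gen (fst W) n. ereal (real (length (pos (snd W) y u)) / real n))"
      unfolding eventually_sequentially by blast
    show "\<exists>n0. \<forall>n\<ge>n0. \<exists>u. alive (fst W) u \<and> length u = n \<and> real_of_rat c < real (length (pos (snd W) y u)) / real n"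
    proof (rule exI[of _ n0], intro allI impI)
      fix n assume "n0 \<le> n"
      with n0 obtain u where "u \<in> gen (fst W) n" "ereal (real_of_rat c) < ereal (real (length (pos (snd W) y u)) / real n)"
        unfolding less_SUP_iff by blast
      then show "\<exists>u. alive (fst W) u \<and> length u = n \<and> real_of_rat c < real (length (pos (snd W) y u)) / real n"
        by (auto simp: gen_def)
    qed
  qed
next
  fix W assume S: "SE a y W"
  have "ereal a \<le> liminf (\<lambda>n. SUP u\<in>gen (fst W) n. ereal (real (length (pos (snd W) y u)) / real n))"
    unfolding le_Liminf_iff
  proof (intro allI impI)
    fix b assume "b < ereal a"
    from rat_between[OF this] obtain c :: rat where c: "b < ereal (real_of_rat c)" "real_of_rat c < a" by blast
    from S c(2) obtain n0 where n0: "\<forall>n\<ge>n0. \<exists>u. alive (fst W) u \<and> length u = n \<and> real_of_rat c < real (length (pos (snd W) y u)) / real n"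
      unfolding SE_def by blast
    show "eventually (\<lambda>n. b < (SUP u\<in>gen (fst W) n. ereal (real (length (pos (snd W) y u)) / real n))) sequentially"
      unfolding eventually_sequentially
    proof (rule exI[of _ n0], intro allI impI)
      fix n assume "n0 \<le> n"
      with n0 obtain u where u: "alive (fst W) u" "length u = n" "real_of_rat c < real (length (pos (snd W) y u)) / real n"
        by blast
      have "ereal (real_of_rat c) < ereal (real (length (pos (snd W) y u)) / real n)"
        using u(3) by simp
      with c(1) have "b < ereal (real (length (pos (snd W) y u)) / real n)"
        by (rule order.strict_trans)
      also have "\<dots> \<le> (SUP u\<in>gen (fst W) n. ereal (real (length (pos (snd W) y u)) / real n))"
        by (rule SUP_upper) (use u in \<open>simp add: gen_def\<close>)
      finally show "b < (SUP u\<in>gen (fst W) n. ereal (real (length (pos (snd W) y u)) / real n))" .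
    qed
  qed
  then show "W \<in> speed_event a y" by (simp add: speed_event_def)
qed

lemma SE_sets[measurable]: "{W. SE a y W} \<in> sets (brw_space lam kap \<mu>)"
proof -
  have "{W. SE a y W} = {W \<in> space (brw_space lam kap \<mu>). \<forall>c::rat. real_of_rat c < a \<longrightarrow> (\<exists>n0::nat. \<forall>n::nat. n0 \<le> n \<longrightarrow>
     (\<exists>u. alive (fst W) u \<and> length u = n \<and> real_of_rat c < real (length (pos (snd W) y u)) / real n))}"
    by (auto simp: SE_def)
  also have "\<dots> \<in> sets (brw_space lam kap \<mu>)" by measurable
  finally show ?thesis .
qed

lemma SE_shift:
  assumes a: "0 < a" and al: "alive (fst W) v" and pv: "pos (snd W) y v = z" and S: "SE a z (shift v W)"
  shows "SE a y W"
  unfolding SE_def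
proof (intro allI impI)
  fix c :: rat assume c: "real_of_rat c < a"
  have "max (real_of_rat c) 0 < a" using a c by simp
  from Rats_dense_in_real[OF this] obtain q where q: "q \<in> \<rat>" "max (real_of_rat c) 0 < q" "q < a" by blast
  obtain c2 where c2: "q = real_of_rat c2" using q(1) Rats_cases by blast
  from S c2 q obtain n0 where n0: "\<forall>n\<ge>n0. \<exists>s. alive (fst (shift v W)) s \<and> length s = n \<and>
      real_of_rat c2 < real (length (pos (snd (shift v W)) z s)) / real n"
    unfolding SE_def by auto
  define K where "K = nat \<lceil>real_of_rat c * real (length v) / (q - real_of_rat c)\<rceil>"
  show "\<exists>n0. \<forall>n\<ge>n0. \<exists>u. alive (fst W) u \<and> length u = n \<and> real_of_rat c < real (length (pos (snd W) y u)) / real n"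
  proof (rule exI[of _ "length v + max n0 K"], intro allI impI)
    fix n' assume n': "length v + max n0 K \<le> n'"
    define n where "n = n' - length v"
    have nn: "n0 \<le> n" "K \<le> n" "n' = n + length v" using n' by (auto simp: n_def)
    obtain s where s: "alive (fst (shift v W)) s" "length s = n"
      "q < real (length (pos (snd (shift v W)) z s)) / real n"
      using n0 nn(1) c2 by blast
    define P where "P = real (length (pos (snd (shift v W)) z s))"
    have npos: "0 < n"
    proof (rule ccontr)
      assume "\<not> 0 < n" then have "n = 0" by simp
      then show False using s(3) q(2) by simp
    qed
    have qn: "q * real n < P" using s(3) npos by (simp add: P_def field_simps)
    have alv: "alive (fst W) (v @ s)" using s(1) al by (simp add: shift_fst alive_append)
    have pvs: "pos (snd W) y (v @ s) = pos (snd (shift v W)) z s" using pos_shift[of W y v s] pv by simp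
    have n'pos: "0 < real n'" using nn npos by simp
    have "real_of_rat c < P / real n'"
    proof (cases "real_of_rat c \<le> 0")
      case True
      have "0 < P" using qn q(2) npos by (smt (verit) mult_pos_pos of_nat_0_less_iff)
      then show ?thesis using True n'pos by (smt (verit) divide_pos_pos)
    next
      case False
      have d: "0 < q - real_of_rat c" using q(2) by simp
      have "real_of_rat c * real (length v) / (q - real_of_rat c) \<le> real K"
        unfolding K_def by (rule real_nat_ceiling_ge)
      also have "\<dots> \<le> real n" using nn(2) by simp
      finally have "real_of_rat c * real (length v) \<le> real n * (q - real_of_rat c)"
        using d by (simp add: pos_divide_le_eq)
      then have "real_of_rat c * real n' \<le> q * real n" using nn(3) by (simp add: algebra_simps)
      with qn have "real_of_rat c * real n' < P" by simp
      then show ?thesis using n'pos by (simp add: field_simps)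
    qed
    then show "\<exists>u. alive (fst W) u \<and> length u = n' \<and> real_of_rat c < real (length (pos (snd W) y u)) / real n'"
      using alv pvs s(2) nn(3) by (intro exI[of _ "v @ s"]) (simp add: P_def)
  qed
qed

lemma q_le:
  assumes a: "0 < a" and hit: "emeasure (brw_space lam kap \<mu>) (NH y z) = 0"
  shows "q lam kap \<mu> a z \<le> q lam kap \<mu> a y"
proof -
  let ?M = "brw_space lam kap \<mu>"
  interpret M: prob_space ?M by (rule prob_brw)
  have Ey: "speed_event a y \<in> sets ?M" unfolding speed_eq by (rule SE_sets)
  have Ez: "speed_event a z \<in> sets ?M" unfolding speed_eq by (rule SE_sets)
  have cy: "UNIV - speed_event a y \<in> sets ?M" using sets.compl_sets[OF Ey] by simp
  have cz: "UNIV - speed_event a z \<in> sets ?M" using sets.compl_sets[OF Ez] by simp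
  have cover: "emeasure ?M (UNIV - (\<Union>v. Fset 0 z y v)) = 0"
  proof -
    have "UNIV - (\<Union>v. Fset 0 z y v) \<subseteq> NH y z"
    proof
      fix W assume "W \<in> UNIV - (\<Union>v. Fset 0 z y v)"
      then have nf: "\<forall>v. W \<notin> Fset 0 z y v" by blast
      { fix u assume "alive (fst W) u" "pos (snd W) y u = z"
        then have "good 0 z y W u" by (simp add: good_def)
        from Fset_cover[OF this] nf have False by blast }
      then show "W \<in> NH y z" unfolding NH_def by blast
    qed
    then show ?thesis using hit by (metis NH_sets emeasure_eq_0)
  qed
  have "emeasure ?M (UNIV - speed_event a y) \<le> emeasure ?M UNIV * emeasure ?M (UNIV - speed_event a z)"
  proof (rule decomp[OF cy _ cz cover])
    show "UNIV \<in> sets ?M" using sets.top[of ?M] by simp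
  next
    fix v w1 w2
    assume a1: "mg v (w1, w2) \<in> UNIV - speed_event a y" and a2: "mg v (w1, w2) \<in> Fset 0 z y v"
    let ?W = "mg v (w1, w2)"
    from a2 have g: "alive (fst ?W) v" "pos (snd ?W) y v = z"
      by (auto simp: Fset_def good_def)
    have "w2 \<notin> speed_event a z"
    proof
      assume "w2 \<in> speed_event a z"
      then have "SE a z (shift v ?W)" by (simp add: speed_eq shift_mg)
      from SE_shift[OF a g this] have "?W \<in> speed_event a y" by (simp add: speed_eq)
      with a1 show False by simp
    qed
    then show "w1 \<in> UNIV \<and> w2 \<in> UNIV - speed_event a z" by simp
  qed
  also have "emeasure ?M UNIV = 1" using M.emeasure_space_1 by simp
  finally have "measure ?M (UNIV - speed_event a y) \<le> measure ?M (UNIV - speed_event a z)"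
    by (simp add: M.emeasure_eq_measure)
  moreover have "measure ?M (UNIV - speed_event a y) = 1 - measure ?M (speed_event a y)"
    using M.prob_compl[OF Ey] by simp
  moreover have "measure ?M (UNIV - speed_event a z) = 1 - measure ?M (speed_event a z)"
    using M.prob_compl[OF Ez] by simp
  ultimately show ?thesis unfolding q_def by simp
qed

lemma verts_take: "x \<in> verts kap \<Longrightarrow> take j x \<in> verts kap"
  unfolding verts_def by (auto simp: min_def)

lemma verts_nth: "x \<in> verts kap \<Longrightarrow> i < length x \<Longrightarrow> x ! i < kap (take i x)"
  unfolding verts_def by auto

lemma step_down:
  assumes lam: "0 < lam" and x: "x \<in> verts kap" and j: "j < length x"
  shows "take (Suc j) x \<in> set_pmf (step lam kap (take j x))"
proof -
  have xj: "x ! j < kap (take j x)" by (rule verts_nth[OF x j])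
  have tS: "take (Suc j) x = take j x @ [x ! j]" using j by (simp add: take_Suc_conv_app_nth)
  have fin: "finite {..<kap (take j x)}" "{..<kap (take j x)} \<noteq> {}" using xj by auto
  show ?thesis
  proof (cases "take j x = []")
    case True
    then have "j = 0" using j by auto
    then show ?thesis using fin xj True tS by (auto simp: step_def)
  next
    case False
    have p: "0 < lam / (lam + real (kap (take j x)))" "lam / (lam + real (kap (take j x))) < 1"
      using lam xj by (auto simp: field_simps)
    show ?thesis using False p fin xj tS
      by (auto simp: step_def set_pmf_bernoulli intro!: bexI[of _ False])
  qed
qed

lemma step_up:
  assumes lam: "0 < lam" and tree: "\<forall>x\<in>verts kap. kap x \<ge> 1" and x: "x \<in> verts kap"
    and j: "j < length x"
  shows "take (length x - Suc j) x \<in> set_pmf (step lam kap (take (length x - j) x))"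
proof -
  let ?t = "take (length x - j) x"
  have ne: "?t \<noteq> []" using j by (cases x) auto
  have k: "1 \<le> kap ?t" using tree verts_take[OF x] by blast
  have p: "0 < lam / (lam + real (kap ?t))" "lam / (lam + real (kap ?t)) < 1"
    using lam k by (auto simp: field_simps)
  have bl: "butlast ?t = take (length x - Suc j) x"
    using j by (simp add: butlast_take)
  show ?thesis using ne p bl
    by (auto simp: step_def set_pmf_bernoulli intro!: bexI[of _ True])
qed

theorem lemma2p7:
  fixes lam a :: real and kap :: "nat list \<Rightarrow> nat" and \<mu> :: "nat pmf"
  assumes lam_pos: "lam > 0"
    and tree: "\<forall>x\<in>verts kap. kap x \<ge> 1"
    and mu0: "pmf \<mu> 0 = 0" and mu1: "pmf \<mu> 1 < 1"
    and mean_fin: "integrable (measure_pmf \<mu>) real"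
    and mean_gt1: "measure_pmf.expectation \<mu> real > 1"
    and strongly_recurrent:
      "\<forall>x\<in>verts kap. measure (brw_space lam kap \<mu>) (recurrent_event x) = 1"
    and a_pos: "a > 0"
    and x_vert: "x \<in> verts kap"
  shows "q lam kap \<mu> a x = q lam kap \<mu> a []"
proof -
  have r0: "[] \<in> verts kap" by (simp add: verts_def)
  have h1: "emeasure (brw_space lam kap \<mu>) (NH [] x) = 0"
  proof (rule hit_as[where p = "\<lambda>j. take j x" and k = "length x"])
    show "measure (brw_space lam kap \<mu>) (recurrent_event []) = 1" using strongly_recurrent r0 by blast
    show "\<forall>j<length x. take (Suc j) x \<in> set_pmf (step lam kap (take j x))"
      using step_down[OF lam_pos x_vert] by blast
  qed (simp_all add: mu0)
  have h2: "emeasure (brw_space lam kap \<mu>) (NH x []) = 0"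
  proof (rule hit_as[where p = "\<lambda>j. take (length x - j) x" and k = "length x"])
    show "measure (brw_space lam kap \<mu>) (recurrent_event x) = 1" using strongly_recurrent x_vert by blast
    show "\<forall>j<length x. take (length x - Suc j) x \<in> set_pmf (step lam kap (take (length x - j) x))"
      using step_up[OF lam_pos tree x_vert] by blast
  qed (simp_all add: mu0)
  have "q lam kap \<mu> a x \<le> q lam kap \<mu> a []" by (rule q_le[OF a_pos h1])
  moreover have "q lam kap \<mu> a [] \<le> q lam kap \<mu> a x" by (rule q_le[OF a_pos h2])
  ultimately show ?thesis by simp
qed

end
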